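(* Let $A=\{a_1,\ldots,a_n\}$ and $B=\{b_1,\ldots,b_m\}$ be finite point sets in $\mathbb{R}^2$ with $m\le n$, and let $\mathcal{D}_{B,A}$ be their partial-matching subdivision. Then every edge of $\mathcal{D}_{B,A}$ has a normal vector of the form $a_j-a_i$ for suitable $i\neq j\in\{1,\ldots,n\}$.
   Context: An injective assignment (matching) is an injective map $\pi:B\to A$; write $a_{\pi(i)}$ for the point assigned to $b_i$. For a translation $t\in\mathbb{R}^2$ its cost is $f(\pi,t)=\sum_{i=1}^m\|b_i+t-a_{\pi(i)}\|^2=c_\pi+\langle t,d_\pi\rangle+m\|t\|^2$, where $c_\pi=\sum_{i=1}^m\|b_i-a_{\pi(i)}\|^2$ and $d_\pi=2\sum_{i=1}^m(b_i-a_{\pi(i)})$. The partial-matching subdivision $\mathcal{D}_{B,A}$ is the subdivision of the plane in which two translations $t_1,t_2$ lie in the same region iff the set of injections minimizing $f(\cdot,t)$ is the same at $t_1$ and $t_2$; equivalently, it is the minimization diagram (projection onto the $t$-plane) of the lower envelope $\mathcal{E}_{B,A}(t)=\min_{\pi}(c_\pi+\langle t,d_\pi\rangle)$ of finitely many planes. It is a convex subdivision of the plane into convex polygonal regions (open two-dimensional faces), edges and vertices. *)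

theory Defs
  imports "HOL-Analysis.Analysis"
begin

text \<open>Points are indexed families: A = a 0, ..., a (n-1), B = b 0, ..., b (m-1) in R^2.
  Injective assignments B -> A are represented as extensional injections {..<m} -> {..<n}.\<close>

definition injections :: "nat \<Rightarrow> nat \<Rightarrow> (nat \<Rightarrow> nat) set" where
  "injections m n = {\<pi>. \<pi> \<in> {..<m} \<rightarrow>\<^sub>E {..<n} \<and> inj_on \<pi> {..<m}}"

definition match_cost ::
  "(nat \<Rightarrow> real^2) \<Rightarrow> (nat \<Rightarrow> real^2) \<Rightarrow> nat \<Rightarrow> (nat \<Rightarrow> nat) \<Rightarrow> real^2 \<Rightarrow> real" where
  "match_cost a b m \<pi> t = (\<Sum>i<m. (norm (b i + t - a (\<pi> i)))\<^sup>2)"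

definition optimal_matchings ::
  "(nat \<Rightarrow> real^2) \<Rightarrow> (nat \<Rightarrow> real^2) \<Rightarrow> nat \<Rightarrow> nat \<Rightarrow> real^2 \<Rightarrow> (nat \<Rightarrow> nat) set" where
  "optimal_matchings a b m n t =
     {\<pi> \<in> injections m n. \<forall>\<sigma> \<in> injections m n. match_cost a b m \<pi> t \<le> match_cost a b m \<sigma> t}"

definition pm_face ::
  "(nat \<Rightarrow> real^2) \<Rightarrow> (nat \<Rightarrow> real^2) \<Rightarrow> nat \<Rightarrow> nat \<Rightarrow> (real^2) set \<Rightarrow> bool" where
  "pm_face a b m n F \<longleftrightarrow>
     (\<exists>t0. F = {t. optimal_matchings a b m n t = optimal_matchings a b m n t0})"

definition pm_edge ::
  "(nat \<Rightarrow> real^2) \<Rightarrow> (nat \<Rightarrow> real^2) \<Rightarrow> nat \<Rightarrow> nat \<Rightarrow> (real^2) set \<Rightarrow> bool" where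
  "pm_edge a b m n E \<longleftrightarrow>
     pm_face a b m n E \<and> collinear E \<and> (\<exists>p\<in>E. \<exists>q\<in>E. p \<noteq> q)"

definition normal_vector :: "real^2 \<Rightarrow> (real^2) set \<Rightarrow> bool" where
  "normal_vector v E \<longleftrightarrow> v \<noteq> 0 \<and> (\<forall>p\<in>E. \<forall>q\<in>E. (p - q) \<bullet> v = 0)"

end

theory Submission
  imports Defs
begin

lemma cost_expand:
  "match_cost a b m \<pi> t = (\<Sum>i<m. (norm (b i - a (\<pi> i)))\<^sup>2)
     + 2 * (t \<bullet> (\<Sum>i<m. b i - a (\<pi> i))) + real m * (norm t)\<^sup>2"
proof -
  have h: "(norm (b i + t - a (\<pi> i)))\<^sup>2 = (norm (b i - a (\<pi> i)))\<^sup>2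
     + 2 * (t \<bullet> (b i - a (\<pi> i))) + (norm t)\<^sup>2" for i
  proof -
    have g: "(norm (x + y))\<^sup>2 = (norm x)\<^sup>2 + 2 * (y \<bullet> x) + (norm y)\<^sup>2" for x y :: "real^2"
      by (simp add: power2_norm_eq_inner inner_add_left inner_add_right inner_commute)
    have "b i + t - a (\<pi> i) = (b i - a (\<pi> i)) + t" by simp
    then show ?thesis using g[of "b i - a (\<pi> i)" t] by metis
  qed
  show ?thesis unfolding match_cost_def h
    by (simp add: sum.distrib inner_sum_right sum_distrib_left)
qed

lemma exchange:
  fixes a :: "nat \<Rightarrow> real^2"
  assumes pi: "\<pi> \<in> injections m n" and sg: "\<sigma> \<in> injections m n"
    and i1: "i1 < m" and nx: "\<pi> i1 \<notin> \<sigma> ` {..<m}"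
  shows "\<exists>\<tau> \<pi>' y. \<tau> \<in> injections m n \<and> \<pi>' \<in> injections m n
     \<and> (\<forall>t. match_cost a b m \<tau> t + match_cost a b m \<pi>' t
            = match_cost a b m \<pi> t + match_cost a b m \<sigma> t)
     \<and> y \<in> \<sigma> ` {..<m}
     \<and> (\<Sum>i<m. a (\<pi> i)) - (\<Sum>i<m. a (\<tau> i)) = a (\<pi> i1) - a y"
proof -
  define M where "M = {..<m::nat}"
  have piM: "\<And>i. i \<in> M \<Longrightarrow> \<pi> i < n" and injp: "inj_on \<pi> M"
    using pi unfolding injections_def M_def by auto
  have sgM: "\<And>i. i \<in> M \<Longrightarrow> \<sigma> i < n" and injs: "inj_on \<sigma> M"
    using sg unfolding injections_def M_def by auto
  define x where "x = \<pi> i1"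
  define R where "R = {(i,k). i \<in> M \<and> k \<in> M \<and> \<sigma> i = \<pi> k}"
  define C where "C = {k. (i1,k) \<in> R\<^sup>*}"
  have i1C: "i1 \<in> C" unfolding C_def by simp
  have CM: "C \<subseteq> M"
  proof
    fix k assume "k \<in> C"
    then have "(i1,k) \<in> R\<^sup>*" unfolding C_def by simp
    then show "k \<in> M"
      by (cases rule: rtranclE) (use i1 in \<open>auto simp: R_def M_def\<close>)
  qed
  have fwd: "\<And>i k. i \<in> C \<Longrightarrow> k \<in> M \<Longrightarrow> \<sigma> i = \<pi> k \<Longrightarrow> k \<in> C"
  proof -
    fix i k assume "i \<in> C" "k \<in> M" "\<sigma> i = \<pi> k"
    then have "(i,k) \<in> R" using CM unfolding R_def by auto
    with \<open>i \<in> C\<close> show "k \<in> C" unfolding C_def by (auto intro: rtrancl_into_rtrancl)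
  qed
  have pred: "\<And>k. k \<in> C \<Longrightarrow> k \<noteq> i1 \<Longrightarrow> \<exists>i\<in>C. \<sigma> i = \<pi> k"
  proof -
    fix k assume "k \<in> C" "k \<noteq> i1"
    then have "(i1,k) \<in> R\<^sup>*" unfolding C_def by simp
    then show "\<exists>i\<in>C. \<sigma> i = \<pi> k"
      by (cases rule: rtranclE) (use \<open>k \<noteq> i1\<close> in \<open>auto simp: R_def C_def\<close>)
  qed
  have finC: "finite C" using CM finite_subset unfolding M_def by blast
  have xnot: "x \<notin> \<sigma> ` M" using nx unfolding x_def M_def by simp
  have D1: "\<pi> ` C - \<sigma> ` C = {x}"
  proof
    show "\<pi> ` C - \<sigma> ` C \<subseteq> {x}"
    proof
      fix z assume "z \<in> \<pi> ` C - \<sigma> ` C"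
      then obtain k where k: "k \<in> C" "z = \<pi> k" "z \<notin> \<sigma> ` C" by auto
      show "z \<in> {x}"
      proof (cases "k = i1")
        case True then show ?thesis using k x_def by simp
      next
        case False then obtain i where "i \<in> C" "\<sigma> i = \<pi> k" using pred k by blast
        then show ?thesis using k by (metis imageI)
      qed
    qed
    show "{x} \<subseteq> \<pi> ` C - \<sigma> ` C" using i1C xnot CM x_def by auto
  qed
  have cp: "card (\<pi> ` C) = card C" using card_image inj_on_subset[OF injp CM] by blast
  have cs: "card (\<sigma> ` C) = card C" using card_image inj_on_subset[OF injs CM] by blast
  have "card (\<sigma> ` C - \<pi> ` C) = card (\<pi> ` C - \<sigma> ` C)"
    using card_Diff_subset_Int[of "\<sigma> ` C" "\<pi> ` C"] card_Diff_subset_Int[of "\<pi> ` C" "\<sigma> ` C"]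
      cp cs finC by (simp add: Int_commute)
  then have "card (\<sigma> ` C - \<pi> ` C) = 1" using D1 by simp
  then obtain y where D2: "\<sigma> ` C - \<pi> ` C = {y}" by (rule card_1_singletonE)
  have yM: "y \<in> \<sigma> ` M" using D2 CM by (metis Diff_iff image_mono insertI1 subsetD)
  have ynot: "y \<notin> \<pi> ` M"
  proof
    assume "y \<in> \<pi> ` M"
    then obtain k where "k \<in> M" "y = \<pi> k" by auto
    moreover obtain i where "i \<in> C" "y = \<sigma> i" using D2 by auto
    ultimately have "k \<in> C" using fwd by metis
    then show False using D2 \<open>y = \<pi> k\<close> by auto
  qed
  define \<tau> where "\<tau> = restrict (\<lambda>i. if i \<in> C then \<sigma> i else \<pi> i) M"
  define \<pi>' where "\<pi>' = restrict (\<lambda>i. if i \<in> C then \<pi> i else \<sigma> i) M"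
  have tinj: "\<tau> \<in> injections m n"
    unfolding injections_def
  proof (intro CollectI conjI)
    show "\<tau> \<in> {..<m} \<rightarrow>\<^sub>E {..<n}" unfolding \<tau>_def M_def[symmetric]
      using piM sgM by (auto simp: restrict_PiE_iff)
    show "inj_on \<tau> {..<m}" unfolding M_def[symmetric]
    proof (rule inj_onI)
      fix i k assume ik: "i \<in> M" "k \<in> M" "\<tau> i = \<tau> k"
      show "i = k"
      proof (cases "i \<in> C"; cases "k \<in> C")
        assume "i \<in> C" "k \<in> C" then show ?thesis using ik injs by (auto simp: \<tau>_def inj_on_def)
      next
        assume a1: "i \<in> C" "k \<notin> C"
        then have "\<sigma> i = \<pi> k" using ik by (simp add: \<tau>_def)
        then show ?thesis using fwd[OF a1(1) ik(2)] a1 by blast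
      next
        assume a1: "i \<notin> C" "k \<in> C"
        then have "\<sigma> k = \<pi> i" using ik by (simp add: \<tau>_def)
        then show ?thesis using fwd[OF a1(2) ik(1)] a1 by blast
      next
        assume "i \<notin> C" "k \<notin> C" then show ?thesis using ik injp by (auto simp: \<tau>_def inj_on_def)
      qed
    qed
  qed
  have bad: "\<And>i k. i \<in> C \<Longrightarrow> k \<in> M \<Longrightarrow> k \<notin> C \<Longrightarrow> \<pi> i \<noteq> \<sigma> k"
  proof
    fix i k assume h: "i \<in> C" "k \<in> M" "k \<notin> C" "\<pi> i = \<sigma> k"
    have "\<pi> i \<in> \<pi> ` C" using h(1) by (rule imageI)
    then have "\<pi> i = x \<or> \<pi> i \<in> \<sigma> ` C" using D1 by blast
    then show False
    proof
      assume "\<pi> i = x" then show False using xnot h by auto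
    next
      assume "\<pi> i \<in> \<sigma> ` C"
      then obtain j where "j \<in> C" "\<sigma> j = \<sigma> k" using h by auto
      then have "j = k" using injs CM h by (auto simp: inj_on_def)
      then show False using h \<open>j \<in> C\<close> by simp
    qed
  qed
  have pinj: "\<pi>' \<in> injections m n"
    unfolding injections_def
  proof (intro CollectI conjI)
    show "\<pi>' \<in> {..<m} \<rightarrow>\<^sub>E {..<n}" unfolding \<pi>'_def M_def[symmetric]
      using piM sgM by (auto simp: restrict_PiE_iff)
    show "inj_on \<pi>' {..<m}" unfolding M_def[symmetric]
    proof (rule inj_onI)
      fix i k assume ik: "i \<in> M" "k \<in> M" "\<pi>' i = \<pi>' k"
      show "i = k"
      proof (cases "i \<in> C"; cases "k \<in> C")
        assume "i \<in> C" "k \<in> C" then show ?thesis using ik injp by (auto simp: \<pi>'_def inj_on_def)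
      next
        assume a1: "i \<in> C" "k \<notin> C"
        then have "\<pi> i = \<sigma> k" using ik by (simp add: \<pi>'_def)
        then show ?thesis using bad[OF a1(1) ik(2) a1(2)] by blast
      next
        assume a1: "i \<notin> C" "k \<in> C"
        then have "\<pi> k = \<sigma> i" using ik by (simp add: \<pi>'_def)
        then show ?thesis using bad[OF a1(2) ik(1) a1(1)] by blast
      next
        assume "i \<notin> C" "k \<notin> C" then show ?thesis using ik injs by (auto simp: \<pi>'_def inj_on_def)
      qed
    qed
  qed
  have cost: "match_cost a b m \<tau> t + match_cost a b m \<pi>' t
            = match_cost a b m \<pi> t + match_cost a b m \<sigma> t" for t
    unfolding match_cost_def sum.distrib[symmetric]
  proof (rule sum.cong[OF refl])
    fix i assume "i \<in> {..<m}"
    then have iM: "i \<in> M" by (simp add: M_def)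
    show "(norm (b i + t - a (\<tau> i)))\<^sup>2 + (norm (b i + t - a (\<pi>' i)))\<^sup>2
        = (norm (b i + t - a (\<pi> i)))\<^sup>2 + (norm (b i + t - a (\<sigma> i)))\<^sup>2"
      by (cases "i \<in> C") (simp_all add: \<tau>_def \<pi>'_def iM)
  qed
  have s1: "(\<Sum>i<m. a (\<tau> i)) = (\<Sum>i\<in>C. a (\<sigma> i)) + (\<Sum>i\<in>M - C. a (\<pi> i))"
  proof -
    have "(\<Sum>i<m. a (\<tau> i)) = (\<Sum>i\<in>M. if i \<in> C then a (\<sigma> i) else a (\<pi> i))"
      unfolding M_def[symmetric] by (rule sum.cong) (auto simp: \<tau>_def)
    also have "\<dots> = (\<Sum>i\<in>M \<inter> {i. i \<in> C}. a (\<sigma> i)) + (\<Sum>i\<in>M \<inter> - {i. i \<in> C}. a (\<pi> i))"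
      by (rule sum.If_cases) (simp add: M_def)
    also have "M \<inter> {i. i \<in> C} = C" using CM by auto
    also have "M \<inter> - {i. i \<in> C} = M - C" by auto
    finally show ?thesis .
  qed
  have s2: "(\<Sum>i<m. a (\<pi> i)) = (\<Sum>i\<in>C. a (\<pi> i)) + (\<Sum>i\<in>M - C. a (\<pi> i))"
    unfolding M_def[symmetric] using sum.subset_diff[OF CM, of "\<lambda>i. a (\<pi> i)"]
    by (simp add: M_def add.commute)
  have r1: "(\<Sum>i\<in>C. a (\<pi> i)) = sum a (\<pi> ` C)"
    using sum.reindex[OF inj_on_subset[OF injp CM], of a] by simp
  have r2: "(\<Sum>i\<in>C. a (\<sigma> i)) = sum a (\<sigma> ` C)"
    using sum.reindex[OF inj_on_subset[OF injs CM], of a] by simp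
  have e1: "\<pi> ` C = insert x (\<pi> ` C \<inter> \<sigma> ` C)" using D1 by blast
  have e2: "\<sigma> ` C = insert y (\<pi> ` C \<inter> \<sigma> ` C)" using D2 by blast
  have fI: "finite (\<pi> ` C \<inter> \<sigma> ` C)" using finC by simp
  have xI: "x \<notin> \<pi> ` C \<inter> \<sigma> ` C" using D1 by blast
  have yI: "y \<notin> \<pi> ` C \<inter> \<sigma> ` C" using D2 by blast
  have u1: "sum a (\<pi> ` C) = sum a (\<pi> ` C \<inter> \<sigma> ` C) + a x"
    by (subst e1) (simp only: sum.insert[OF fI xI] add.commute)
  have u2: "sum a (\<sigma> ` C) = sum a (\<pi> ` C \<inter> \<sigma> ` C) + a y"
    by (subst e2) (simp only: sum.insert[OF fI yI] add.commute)
  have fin: "(\<Sum>i<m. a (\<pi> i)) - (\<Sum>i<m. a (\<tau> i)) = a x - a y"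
    unfolding s1 s2 r1 r2 u1 u2 by simp
  have cost': "\<forall>t. match_cost a b m \<tau> t + match_cost a b m \<pi>' t
            = match_cost a b m \<pi> t + match_cost a b m \<sigma> t" using cost by blast
  show ?thesis
    apply (rule exI[of _ \<tau>], rule exI[of _ \<pi>'], rule exI[of _ y])
    using tinj pinj cost' yM fin unfolding x_def M_def by (intro conjI)
qed

lemma cost_cont: "continuous_on UNIV (\<lambda>t. match_cost a b m \<pi> t)"
  unfolding match_cost_def by (intro continuous_intros)

lemma inj_finite: "finite (injections m n)"
proof -
  have "injections m n \<subseteq> {..<m} \<rightarrow>\<^sub>E {..<n}" unfolding injections_def by auto
  moreover have "finite ({..<m} \<rightarrow>\<^sub>E {..<n})" by (intro finite_PiE) auto
  ultimately show ?thesis by (rule finite_subset)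
qed

lemma inj_nonempty: "m \<le> n \<Longrightarrow> restrict id {..<m} \<in> injections m n"
  unfolding injections_def by (auto simp: restrict_PiE_iff inj_on_def)

lemma opt_iff: "\<pi> \<in> optimal_matchings a b m n t \<longleftrightarrow>
   \<pi> \<in> injections m n \<and> (\<forall>\<sigma>\<in>injections m n. match_cost a b m \<pi> t \<le> match_cost a b m \<sigma> t)"
  unfolding optimal_matchings_def by simp

lemma opt_nonempty:
  assumes "m \<le> n" shows "\<exists>\<pi>. \<pi> \<in> optimal_matchings a b m n t"
proof -
  obtain \<pi> where "is_arg_min (\<lambda>\<pi>. match_cost a b m \<pi> t) (\<lambda>\<pi>. \<pi> \<in> injections m n) \<pi>"
    using ex_is_arg_min_if_finite[OF inj_finite, of m n "\<lambda>\<pi>. match_cost a b m \<pi> t"]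
      inj_nonempty[OF assms] by blast
  then show ?thesis unfolding opt_iff is_arg_min_def by (meson not_le)
qed

lemma V_eq: "(\<Sum>i<m. b i - a (\<pi> i) :: real^2) = (\<Sum>i<m. b i) - (\<Sum>i<m. a (\<pi> i))"
  by (simp add: sum_subtractf)

theorem lemma2:
  fixes a b :: "nat \<Rightarrow> real^2" and m n :: nat
  assumes "inj_on a {..<n}" and "inj_on b {..<m}" and "m \<le> n"
    and "pm_edge a b m n E"
  shows "\<exists>i<n. \<exists>j<n. i \<noteq> j \<and> normal_vector (a j - a i) E"
proof -
  define f where "f = match_cost a b m"
  define OPT where "OPT = optimal_matchings a b m n"
  define I where "I = injections m n"
  obtain t0 where Edef: "E = {t. OPT t = OPT t0}" and col: "collinear E"
    and pq: "\<exists>p\<in>E. \<exists>q\<in>E. p \<noteq> q"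
    using assms(4) unfolding pm_edge_def pm_face_def OPT_def by blast
  obtain p where pE: "p \<in> E" using pq by blast
  define S where "S = OPT t0"
  have ES: "\<And>t. t \<in> E \<Longrightarrow> OPT t = S" unfolding Edef S_def by simp
  have oiff: "\<And>\<pi> t. \<pi> \<in> OPT t \<longleftrightarrow> \<pi> \<in> I \<and> (\<forall>\<sigma>\<in>I. f \<pi> t \<le> f \<sigma> t)"
    unfolding OPT_def I_def f_def by (rule opt_iff)
  define Cc where "Cc = (\<lambda>\<pi>. (\<Sum>i<m. (norm (b i - a (\<pi> i)))\<^sup>2))"
  define Sa where "Sa = (\<lambda>\<pi>. (\<Sum>i<m. a (\<pi> i)))"
  have fexp: "\<And>\<pi> t. f \<pi> t = Cc \<pi> + 2 * (t \<bullet> ((\<Sum>i<m. b i) - Sa \<pi>)) + real m * (norm t)\<^sup>2"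
    unfolding f_def Cc_def Sa_def by (simp only: cost_expand V_eq)
  have eqopt: "f \<pi> t = f \<sigma> t" if "\<pi> \<in> OPT t" "\<sigma> \<in> OPT t" for \<pi> \<sigma> t
  proof -
    have "\<pi> \<in> I" "\<forall>\<rho>\<in>I. f \<pi> t \<le> f \<rho> t" using that(1) oiff[of \<pi> t] by blast+
    moreover have "\<sigma> \<in> I" "\<forall>\<rho>\<in>I. f \<sigma> t \<le> f \<rho> t" using that(2) oiff[of \<sigma> t] by blast+
    ultimately show ?thesis by (meson order_antisym)
  qed
  have "\<exists>\<pi>\<in>S. \<exists>\<sigma>\<in>S. Sa \<pi> \<noteq> Sa \<sigma>"
  proof (rule ccontr)
    assume "\<not> ?thesis"
    then have same: "\<And>\<pi> \<sigma>. \<pi> \<in> S \<Longrightarrow> \<sigma> \<in> S \<Longrightarrow> Sa \<pi> = Sa \<sigma>" by blast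
    obtain \<pi>0 where p0: "\<pi>0 \<in> OPT p" using opt_nonempty[OF assms(3)] unfolding OPT_def by blast
    have p0S: "\<pi>0 \<in> S" using p0 ES[OF pE] by simp
    have fsame: "f \<pi> t = f \<pi>0 t" if "\<pi> \<in> S" for \<pi> t
    proof -
      have "f \<pi> p = f \<pi>0 p" using eqopt[where \<pi>=\<pi> and \<sigma>=\<pi>0 and t=p] that p0 ES[OF pE] by simp
      then have "Cc \<pi> = Cc \<pi>0" using same[OF that p0S] fexp by simp
      then show ?thesis using same[OF that p0S] fexp by simp
    qed
    define U where "U = (\<Inter>\<sigma>\<in>I - S. {t. f \<pi>0 t < f \<sigma> t})"
    have "open U" unfolding U_def f_def I_def
      by (intro open_INT finite_Diff inj_finite ballI open_Collect_less cost_cont)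
    have "p \<in> U"
    proof -
      have "f \<pi>0 p < f \<sigma> p" if "\<sigma> \<in> I - S" for \<sigma>
      proof -
        have "\<sigma> \<notin> OPT p" using that ES[OF pE] by simp
        moreover have "\<sigma> \<in> I" using that by blast
        ultimately have "\<not> (\<forall>\<rho>\<in>I. f \<sigma> p \<le> f \<rho> p)" using oiff[of \<sigma> p] by blast
        then obtain \<rho> where "\<rho> \<in> I" "f \<rho> p < f \<sigma> p" by (auto simp: not_le)
        moreover have "f \<pi>0 p \<le> f \<rho> p" using p0 oiff[of \<pi>0 p] \<open>\<rho> \<in> I\<close> by blast
        ultimately show ?thesis by linarith
      qed
      then show ?thesis unfolding U_def by blast
    qed
    have "U \<subseteq> E"
    proof
      fix t assume tU: "t \<in> U"
      have lt: "\<And>\<sigma>. \<sigma> \<in> I \<Longrightarrow> \<sigma> \<notin> S \<Longrightarrow> f \<pi>0 t < f \<sigma> t" using tU unfolding U_def by blast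
      have p0I: "\<pi>0 \<in> I" using p0 oiff[of \<pi>0 p] by blast
      have SI: "S \<subseteq> I"
      proof
        fix \<rho> assume "\<rho> \<in> S" then have "\<rho> \<in> OPT p" using ES[OF pE] by simp
        then show "\<rho> \<in> I" using oiff[of \<rho> p] by blast
      qed
      have "OPT t = S"
      proof
        show "OPT t \<subseteq> S"
        proof
          fix \<rho> assume "\<rho> \<in> OPT t"
          then have "\<rho> \<in> I" "f \<rho> t \<le> f \<pi>0 t" using oiff[of \<rho> t] p0I by auto
          then show "\<rho> \<in> S" using lt by force
        qed
        show "S \<subseteq> OPT t"
        proof
          fix \<rho> assume rS: "\<rho> \<in> S"
          have "f \<rho> t \<le> f \<sigma> t" if "\<sigma> \<in> I" for \<sigma>
          proof (cases "\<sigma> \<in> S")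
            case True then show ?thesis using fsame rS by simp
          next
            case False then show ?thesis using fsame[OF rS] lt[OF that] by simp
          qed
          then show "\<rho> \<in> OPT t" using oiff[of \<rho> t] rS SI by blast
        qed
      qed
      then show "t \<in> E" unfolding Edef S_def by simp
    qed
    obtain r where r: "r > 0" "ball p r \<subseteq> U" using \<open>open U\<close> \<open>p \<in> U\<close> open_contains_ball by blast
    have "collinear (ball p r)" using collinear_subset[OF col] r \<open>U \<subseteq> E\<close> by blast
    moreover have "aff_dim (ball p r) = int DIM(real^2)"
      using aff_dim_open[of "ball p r"] r by simp
    ultimately show False unfolding collinear_aff_dim by simp
  qed
  then obtain \<pi> \<sigma> where piS: "\<pi> \<in> S" and sgS: "\<sigma> \<in> S" and neq: "Sa \<pi> \<noteq> Sa \<sigma>" by blast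
  have piI: "\<pi> \<in> I" using piS oiff[of \<pi> p] ES[OF pE] by auto
  have sgI: "\<sigma> \<in> I" using sgS oiff[of \<sigma> p] ES[OF pE] by auto
  have injp: "inj_on \<pi> {..<m}" and injs: "inj_on \<sigma> {..<m}"
    using piI sgI unfolding I_def injections_def by auto
  have "\<pi> ` {..<m} \<noteq> \<sigma> ` {..<m}"
  proof
    assume h: "\<pi> ` {..<m} = \<sigma> ` {..<m}"
    have "Sa \<pi> = sum a (\<pi> ` {..<m})" unfolding Sa_def using sum.reindex[OF injp, of a] by simp
    also have "\<dots> = sum a (\<sigma> ` {..<m})" using h by simp
    also have "\<dots> = Sa \<sigma>" unfolding Sa_def using sum.reindex[OF injs, of a] by simp
    finally show False using neq by simp
  qed
  moreover have ceq: "card (\<pi> ` {..<m}) = card (\<sigma> ` {..<m})"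
    using card_image[OF injp] card_image[OF injs] by simp
  moreover have "finite (\<sigma> ` {..<m})" by simp
  ultimately have "\<not> \<pi> ` {..<m} \<subseteq> \<sigma> ` {..<m}"
    using card_subset_eq[of "\<sigma> ` {..<m}" "\<pi> ` {..<m}"] by metis
  then obtain i1 where i1: "i1 < m" "\<pi> i1 \<notin> \<sigma> ` {..<m}" by auto
  have "\<exists>\<tau> \<pi>' y. \<tau> \<in> I \<and> \<pi>' \<in> I \<and> (\<forall>t. f \<tau> t + f \<pi>' t = f \<pi> t + f \<sigma> t)
      \<and> y \<in> \<sigma> ` {..<m} \<and> Sa \<pi> - Sa \<tau> = a (\<pi> i1) - a y"
    unfolding I_def f_def Sa_def
    by (rule exchange[OF piI[unfolded I_def] sgI[unfolded I_def] i1])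
  then obtain \<tau> \<pi>' y where tI: "\<tau> \<in> I" and pI': "\<pi>' \<in> I"
    and cost: "\<forall>t. f \<tau> t + f \<pi>' t = f \<pi> t + f \<sigma> t"
    and yM: "y \<in> \<sigma> ` {..<m}" and dif: "Sa \<pi> - Sa \<tau> = a (\<pi> i1) - a y"
    by (elim exE conjE)
  have pO: "\<pi> \<in> OPT p" and sO: "\<sigma> \<in> OPT p" using piS sgS ES[OF pE] by auto
  have "f \<pi> p = f \<sigma> p" using eqopt[OF pO sO] .
  moreover have "f \<pi> p \<le> f \<tau> p" "f \<pi> p \<le> f \<pi>' p" using pO oiff[of \<pi> p] tI pI' by auto
  moreover have "f \<tau> p + f \<pi>' p = f \<pi> p + f \<sigma> p" using cost by blast
  ultimately have "f \<tau> p = f \<pi> p" by linarith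
  then have "\<tau> \<in> OPT p" using pO oiff[of \<pi> p] oiff[of \<tau> p] tI by auto
  then have tS: "\<tau> \<in> S" using ES[OF pE] by simp
  have eqs: "f \<pi> s = f \<tau> s" if "s \<in> E" for s
    using eqopt[where \<pi>=\<pi> and \<sigma>=\<tau> and t=s] piS tS ES[OF that] by simp
  define x where "x = \<pi> i1"
  have xn: "x < n" using piI i1 unfolding x_def I_def injections_def by auto
  have yn: "y < n" using sgI yM unfolding I_def injections_def by auto
  have xy: "x \<noteq> y" using i1 yM unfolding x_def by auto
  have axy: "a x - a y \<noteq> 0" using assms(1) xn yn xy by (auto simp: inj_on_def)
  define v where "v = a x - a y"
  define B where "B = (\<Sum>i<m. b i)"
  have d: "Sa \<tau> = Sa \<pi> - v" using dif unfolding x_def v_def by (simp add: algebra_simps)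
  have lin: "u \<bullet> (B - Sa \<pi>) - u \<bullet> (B - Sa \<tau>) = - (u \<bullet> v)" for u
    unfolding d by (simp add: inner_diff_right)
  have orth: "(s - t) \<bullet> v = 0" if "s \<in> E" "t \<in> E" for s t
  proof -
    have e1: "Cc \<pi> + 2 * (s \<bullet> (B - Sa \<pi>)) = Cc \<tau> + 2 * (s \<bullet> (B - Sa \<tau>))"
      using eqs[OF that(1)] unfolding fexp B_def by simp
    have e2: "Cc \<pi> + 2 * (t \<bullet> (B - Sa \<pi>)) = Cc \<tau> + 2 * (t \<bullet> (B - Sa \<tau>))"
      using eqs[OF that(2)] unfolding fexp B_def by simp
    have "s \<bullet> v = t \<bullet> v" using e1 e2 lin[of s] lin[of t] by linarith
    then show ?thesis by (simp add: inner_diff_left)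
  qed
  have nv: "normal_vector (a x - a y) E"
    unfolding normal_vector_def using axy orth unfolding v_def by blast
  show ?thesis using xn yn xy nv by blast
qed

end
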